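(* For every generalized line graph $G$, the competition number satisfies $k(G)\le 2$.
   Context: All graphs are finite and simple. For a digraph $D$, its competition graph $C(D)$ is the graph with vertex set $V(D)$ in which two distinct vertices $u,v$ are adjacent iff there is a vertex $x$ with arcs $(u,x),(v,x)\in A(D)$. The competition number $k(G)$ of a graph $G$ is the smallest nonnegative integer $k$ such that $G$ together with $k$ new isolated vertices is the competition graph of an acyclic digraph. For a positive integer $m$, the cocktail party graph $CP(m)$ is the complete multipartite graph with $m$ parts each of size two (vertices $x_l,y_l$, $l\in\{1,\dots,m\}$; $x_i x_j$, $y_iy_j$ adjacent for $i<j$, $x_iy_j$ adjacent for $i\ne j$); $CP(1)$ is two vertices with no edge. A vertex-weighted graph $(H,f)$ is a graph $H$ with a function $f:V(H)\to\mathbb{Z}_{\ge 0}$. The generalized line graph $L(H,f)$ is obtained from the disjoint union of the line graph $L(H)$ (vertex set $E(H)$, two distinct edges adjacent iff they share an endpoint) and the graphs $Q_v:=CP(f(v))$ for each $v\in V(H)$ with $f(v)>0$, by adding all edges between every vertex of $Q_v$ and every $e\in V(L(H))$ that is incident to $v$ in $H$. A graph is a generalized line graph if it is isomorphic to $L(H,f)$ for some vertex-weighted graph $(H,f)$. *)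

theory Defs
  imports Main
begin

definition simple_graph :: "'a set \<Rightarrow> 'a set set \<Rightarrow> bool" where
  "simple_graph V E \<longleftrightarrow> finite V \<and>
     (\<forall>e\<in>E. \<exists>u v. e = {u, v} \<and> u \<noteq> v \<and> u \<in> V \<and> v \<in> V)"

definition graph_iso :: "'a set \<Rightarrow> 'a set set \<Rightarrow> 'b set \<Rightarrow> 'b set set \<Rightarrow> bool" where
  "graph_iso V E V' E' \<longleftrightarrow> (\<exists>\<phi>. bij_betw \<phi> V V' \<and>
     (\<forall>u\<in>V. \<forall>v\<in>V. {u, v} \<in> E \<longleftrightarrow> {\<phi> u, \<phi> v} \<in> E'))"

definition competition_edges :: "'a set \<Rightarrow> ('a \<times> 'a) set \<Rightarrow> 'a set set" where
  "competition_edges V A = {{u, v} | u v. u \<in> V \<and> v \<in> V \<and> u \<noteq> v \<and>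
      (\<exists>x. (u, x) \<in> A \<and> (v, x) \<in> A)}"

text \<open>G together with k new isolated vertices (Inr 0, ..., Inr (k-1)) is the competition
  graph of an acyclic digraph.\<close>
definition comp_with_isolated :: "'a set \<Rightarrow> 'a set set \<Rightarrow> nat \<Rightarrow> bool" where
  "comp_with_isolated V E k \<longleftrightarrow>
     (let V' = (Inl ` V \<union> Inr ` {..<k}) :: ('a + nat) set in
      \<exists>A. A \<subseteq> V' \<times> V' \<and> acyclic A \<and>
          competition_edges V' A = (\<lambda>e. Inl ` e) ` E)"

definition competition_number :: "'a set \<Rightarrow> 'a set set \<Rightarrow> nat" where
  "competition_number V E = (LEAST k. comp_with_isolated V E k)"

text \<open>Generalized line graph L(H,f). Vertices: Inl e for edges e of H, and
  Inr (v, l, b) for v in V(H), 1 \<le> l \<le> f v, b :: bool (b = True is x_l, False is y_l of Q_v).\<close>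
definition glg_verts :: "'b set \<Rightarrow> 'b set set \<Rightarrow> ('b \<Rightarrow> nat) \<Rightarrow> ('b set + ('b \<times> nat \<times> bool)) set" where
  "glg_verts HV HE f = Inl ` HE \<union> {Inr (v, l, b) | v l b. v \<in> HV \<and> 1 \<le> l \<and> l \<le> f v}"

definition glg_edges :: "'b set \<Rightarrow> 'b set set \<Rightarrow> ('b \<Rightarrow> nat) \<Rightarrow> ('b set + ('b \<times> nat \<times> bool)) set set" where
  "glg_edges HV HE f =
     {{Inl e, Inl e'} | e e'. e \<in> HE \<and> e' \<in> HE \<and> e \<noteq> e' \<and> e \<inter> e' \<noteq> {}}
   \<union> {{Inr (v, i, a), Inr (v, j, b)} | v i j a b. v \<in> HV \<and> 1 \<le> i \<and> i \<le> f v \<and>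
        1 \<le> j \<and> j \<le> f v \<and> i \<noteq> j}
   \<union> {{Inl e, Inr (v, i, a)} | e v i a. e \<in> HE \<and> v \<in> e \<and> v \<in> HV \<and> 1 \<le> i \<and> i \<le> f v}"

end

theory Submission imports Defs begin

definition cnd :: "'v list \<Rightarrow> 'v set set \<Rightarrow> nat \<Rightarrow> bool" where
  "cnd ws KK k \<longleftrightarrow> (\<forall>n. card {K\<in>KK. K \<inter> set (drop n ws) \<noteq> {}} + 1 \<le> length ws - n + k)"

lemma assign:
  assumes "distinct ws" "\<forall>K\<in>KK. K \<noteq> {} \<and> K \<subseteq> set ws" "finite S" "card S = k"
    "S \<inter> set ws = {}" "cnd ws KK k"
  shows "\<exists>g. inj_on g KK \<and> (\<forall>K\<in>KK. g K \<in> S \<or> (\<exists>i<length ws. g K = ws!i \<and> K \<subseteq> set (take i ws)))"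
  using assms
proof (induction ws arbitrary: KK S k rule: rev_induct)
  case Nil
  then have "KK = {}" by auto
  then show ?case by auto
next
  case (snoc w ws)
  define KW where "KW = {K\<in>KK. w \<in> K}"
  have finKK: "finite KK"
    by (rule finite_subset[of _ "Pow (set (ws@[w]))"]) (use snoc.prems(2) in auto)
  have finKW: "finite KW" using finKK unfolding KW_def by auto
  have wnot: "w \<notin> set ws" using snoc.prems(1) by auto
  have c1: "card {K\<in>KK. K \<inter> set (drop (length ws) (ws@[w])) \<noteq> {}} + 1 \<le> length (ws@[w]) - length ws + k"
    using snoc.prems(6) unfolding cnd_def by blast
  have "{K\<in>KK. K \<inter> set (drop (length ws) (ws@[w])) \<noteq> {}} = KW" unfolding KW_def by auto
  with c1 have ck: "card KW \<le> k" by simp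
  obtain SW where SW: "SW \<subseteq> S" "card SW = card KW"
    using obtain_subset_with_card_n[of "card KW" S] ck snoc.prems(4) by metis
  have finSW: "finite SW" using SW snoc.prems(3) finite_subset by blast
  obtain h where h: "bij_betw h KW SW"
    using finite_same_card_bij[OF finKW finSW] SW(2) by metis
  define S' where "S' = (S - SW) \<union> {w}"
  define KK' where "KK' = KK - KW"
  have wS: "w \<notin> S" using snoc.prems(5) by auto
  have cardS': "card S' = k - card KW + 1"
    unfolding S'_def using wS SW snoc.prems(3,4) finSW
    by (simp add: card_Diff_subset)
  have "\<exists>g'. inj_on g' KK' \<and> (\<forall>K\<in>KK'. g' K \<in> S' \<or> (\<exists>i<length ws. g' K = ws!i \<and> K \<subseteq> set (take i ws)))"
  proof (rule snoc.IH)
    show "distinct ws" using snoc.prems(1) by simp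
    show "\<forall>K\<in>KK'. K \<noteq> {} \<and> K \<subseteq> set ws"
      using snoc.prems(2) unfolding KK'_def KW_def by auto
    show "finite S'" unfolding S'_def using snoc.prems(3) by simp
    show "card S' = k - card KW + 1" by (rule cardS')
    show "S' \<inter> set ws = {}" unfolding S'_def using snoc.prems(5) wnot by auto
    show "cnd ws KK' (k - card KW + 1)"
      unfolding cnd_def
    proof
      fix n
      show "card {K\<in>KK'. K \<inter> set (drop n ws) \<noteq> {}} + 1 \<le> length ws - n + (k - card KW + 1)"
      proof (cases "n \<le> length ws")
        case True
        define F where "F = {K\<in>KK. K \<inter> set (drop n (ws@[w])) \<noteq> {}}"
        have cF: "card F + 1 \<le> length (ws@[w]) - n + k"
          using snoc.prems(6) unfolding cnd_def F_def by blast
        have sd: "set (drop n (ws@[w])) = set (drop n ws) \<union> {w}" using True by simp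
        have eq: "{K\<in>KK'. K \<inter> set (drop n ws) \<noteq> {}} = F - KW"
          unfolding F_def KK'_def KW_def sd by auto
        have sub: "KW \<subseteq> F" unfolding F_def KW_def sd by auto
        have finF: "finite F" unfolding F_def using finKK by auto
        have "card (F - KW) = card F - card KW" using sub finKW by (simp add: card_Diff_subset)
        moreover have "card KW \<le> card F" using sub finF card_mono by blast
        ultimately show ?thesis using eq cF ck True by simp
      next
        case False
        then show ?thesis by simp
      qed
    qed
  qed
  then obtain g' where g'0: "inj_on g' KK' \<and> (\<forall>K\<in>KK'. g' K \<in> S' \<or> (\<exists>i<length ws. g' K = ws!i \<and> K \<subseteq> set (take i ws)))" ..
  note g' = conjunct1[OF g'0] conjunct2[OF g'0]
  define g where "g K = (if w \<in> K then h K else g' K)" for K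
  have hS: "h K \<in> SW" if "K \<in> KW" for K using bij_betw_apply[OF h that] .
  have g'r: "g' K \<in> (S - SW) \<or> g' K \<in> set (ws@[w])" if "K \<in> KK'" for K
  proof -
    have "g' K \<in> S' \<or> (\<exists>i<length ws. g' K = ws!i \<and> K \<subseteq> set (take i ws))"
      using g'(2) that by (rule bspec)
    then show ?thesis
    proof
      assume "g' K \<in> S'" then show ?thesis unfolding S'_def by auto
    next
      assume "\<exists>i<length ws. g' K = ws!i \<and> K \<subseteq> set (take i ws)"
      then obtain i where "i < length ws" "g' K = ws!i" by blast
      then have "g' K \<in> set ws" by simp
      then show ?thesis by simp
    qed
  qed
  have gS: "g K \<notin> S - SW" if "K \<in> KK" "w \<in> K" for K
    using hS[of K] that unfolding g_def KW_def by auto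
  have gv: "g K \<notin> SW" if "K \<in> KK" "w \<notin> K" for K
  proof -
    have K': "K \<in> KK'" using that unfolding KK'_def KW_def by auto
    have "g K = g' K" using that unfolding g_def by simp
    moreover have "g' K \<notin> SW"
    proof
      assume a: "g' K \<in> SW"
      from g'r[OF K'] show False
      proof
        assume "g' K \<in> S - SW" then show False using a by simp
      next
        assume "g' K \<in> set (ws@[w])"
        then show False using a SW(1) snoc.prems(5) by blast
      qed
    qed
    ultimately show ?thesis by simp
  qed
  show ?case
  proof (intro exI conjI)
    show "inj_on g KK"
    proof (rule inj_onI)
      fix A B assume AB: "A \<in> KK" "B \<in> KK" "g A = g B"
      show "A = B"
      proof (cases "w \<in> A")
        case wA: True
        show ?thesis
        proof (cases "w \<in> B")
          case True
          have "A \<in> KW" "B \<in> KW" using wA True AB unfolding KW_def by auto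
          moreover have "h A = h B" using AB wA True unfolding g_def by simp
          ultimately show ?thesis using h unfolding bij_betw_def inj_on_def by blast
        next
          case False
          have "g A \<in> SW" using hS[of A] wA AB unfolding g_def KW_def by simp
          then show ?thesis using gv[of B] AB False by simp
        qed
      next
        case nA: False
        show ?thesis
        proof (cases "w \<in> B")
          case True
          have "g B \<in> SW" using hS[of B] True AB unfolding g_def KW_def by simp
          then show ?thesis using gv[of A] AB nA by simp
        next
          case False
          have "A \<in> KK'" "B \<in> KK'" using nA False AB unfolding KK'_def KW_def by auto
          moreover have "g' A = g' B" using AB nA False unfolding g_def by simp
          ultimately show ?thesis using g'(1) unfolding inj_on_def by blast
        qed
      qed
    qed
    show "\<forall>K\<in>KK. g K \<in> S \<or> (\<exists>i<length (ws@[w]). g K = (ws@[w])!i \<and> K \<subseteq> set (take i (ws@[w])))"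
    proof
      fix K assume K: "K \<in> KK"
      show "g K \<in> S \<or> (\<exists>i<length (ws@[w]). g K = (ws@[w])!i \<and> K \<subseteq> set (take i (ws@[w])))"
      proof (cases "w \<in> K")
        case True
        have "g K \<in> SW" using hS[of K] K True unfolding g_def KW_def by simp
        then show ?thesis using SW(1) by blast
      next
        case False
        then have K': "K \<in> KK'" using K unfolding KK'_def KW_def by auto
        have gK: "g K = g' K" using False unfolding g_def by simp
        have "g' K \<in> S' \<or> (\<exists>i<length ws. g' K = ws!i \<and> K \<subseteq> set (take i ws))"
          using g'(2) K' by (rule bspec)
        then show ?thesis
        proof
          assume "g' K \<in> S'"
          then consider "g' K \<in> S - SW" | "g' K = w" unfolding S'_def by blast
          then show ?thesis
          proof cases
            case 1 then show ?thesis using gK by simp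
          next
            case 2
            have "K \<subseteq> set ws" using K snoc.prems(2) False by auto
            then have "g K = (ws@[w])!(length ws) \<and> K \<subseteq> set (take (length ws) (ws@[w]))"
              using 2 gK by simp
            then show ?thesis by (intro disjI2 exI[of _ "length ws"]) simp
          qed
        next
          assume "\<exists>i<length ws. g' K = ws!i \<and> K \<subseteq> set (take i ws)"
          then obtain i where i: "i<length ws" "g' K = ws!i" "K \<subseteq> set (take i ws)" by blast
          then have "g K = (ws@[w])!i \<and> K \<subseteq> set (take i (ws@[w]))"
            using gK by (simp add: nth_append)
          then show ?thesis using i(1) by (intro disjI2 exI[of _ i]) simp
        qed
      qed
    qed
  qed
qed


lemma acyc_rank:
  assumes "\<forall>(x,y)\<in>A. (r x::nat) < r y"
  shows "acyclic A"
proof -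
  have "A \<subseteq> inv_image less_than r" using assms by auto
  moreover have "wf (inv_image less_than r)" by simp
  ultimately show ?thesis using wf_acyclic wf_subset by blast
qed

lemma realize:
  fixes ws :: "'a list" and KK :: "'a set set"
  assumes dist: "distinct ws" and setws: "set ws = V" and KKs: "\<forall>K\<in>KK. K \<noteq> {} \<and> K \<subseteq> V"
    and Eeq: "E = {{u,v} | u v. u \<noteq> v \<and> (\<exists>K\<in>KK. u \<in> K \<and> v \<in> K)}"
    and cn: "cnd ws KK k"
  shows "comp_with_isolated V E k"
proof -
  define W where "W = (map Inl ws :: ('a + nat) list)"
  define KK' where "KK' = (\<lambda>K. Inl ` K :: ('a + nat) set) ` KK"
  define S where "S = (Inr ` {..<k} :: ('a + nat) set)"
  define V' where "V' = (Inl ` V \<union> Inr ` {..<k} :: ('a + nat) set)"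
  have finKK: "finite KK"
    by (rule finite_subset[of _ "Pow V"]) (use KKs setws in auto)
  have distW: "distinct W" unfolding W_def using dist by (simp add: distinct_map)
  have KK's: "\<forall>K\<in>KK'. K \<noteq> {} \<and> K \<subseteq> set W"
    using KKs setws unfolding KK'_def W_def by auto
  have finS: "finite S" unfolding S_def by simp
  have cardS: "card S = k" unfolding S_def by (simp add: card_image)
  have SW: "S \<inter> set W = {}" unfolding S_def W_def by auto
  have cnW: "cnd W KK' k"
    unfolding cnd_def
  proof
    fix n
    have sub: "{K\<in>KK'. K \<inter> set (drop n W) \<noteq> {}} \<subseteq> (\<lambda>K. Inl ` K) ` {K\<in>KK. K \<inter> set (drop n ws) \<noteq> {}}"
      unfolding KK'_def W_def by (auto simp: drop_map)
    have "card {K\<in>KK'. K \<inter> set (drop n W) \<noteq> {}} \<le> card ((\<lambda>K. Inl ` K :: ('a+nat) set) ` {K\<in>KK. K \<inter> set (drop n ws) \<noteq> {}})"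
      by (rule card_mono[OF _ sub]) (use finKK in simp)
    also have "\<dots> \<le> card {K\<in>KK. K \<inter> set (drop n ws) \<noteq> {}}" by (rule card_image_le) (use finKK in simp)
    finally show "card {K\<in>KK'. K \<inter> set (drop n W) \<noteq> {}} + 1 \<le> length W - n + k"
      using cn unfolding cnd_def W_def by (metis (no_types, lifting) add_le_mono1 le_trans length_map)
  qed
  obtain g where g: "inj_on g KK'"
    "\<forall>K\<in>KK'. g K \<in> S \<or> (\<exists>i<length W. g K = W!i \<and> K \<subseteq> set (take i W))"
    using assign[OF distW KK's finS cardS SW cnW] by blast
  define A where "A = {(x, g K) | x K. K \<in> KK' \<and> x \<in> K}"
  define r where "r x = (if x \<in> set W then (THE i. i < length W \<and> W!i = x) else length W)" for x
  have rW: "r (W!i) = i" if "i < length W" for i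
  proof -
    have "(THE j. j < length W \<and> W!j = W!i) = i"
      by (rule the_equality) (use that distW nth_eq_iff_index_eq in auto)
    then show ?thesis unfolding r_def using that by simp
  qed
  have rA: "\<forall>(x,y)\<in>A. r x < r y"
  proof (clarify)
    fix x y assume "(x,y) \<in> A"
    then obtain K where K: "K \<in> KK'" "x \<in> K" "y = g K" unfolding A_def by blast
    have "x \<in> set W" using K KK's by blast
    then obtain j where j: "j < length W" "x = W!j" by (auto simp: in_set_conv_nth)
    from g(2) K(1) have "g K \<in> S \<or> (\<exists>i<length W. g K = W!i \<and> K \<subseteq> set (take i W))" by (rule bspec)
    then show "r x < r y"
    proof
      assume "g K \<in> S"
      then have "g K \<notin> set W" using SW by blast
      then have "r y = length W" unfolding r_def K(3) by simp
      then show ?thesis using rW j by simp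
    next
      assume "\<exists>i<length W. g K = W!i \<and> K \<subseteq> set (take i W)"
      then obtain i where i: "i < length W" "g K = W!i" "K \<subseteq> set (take i W)" by blast
      then have "x \<in> set (take i W)" using K by blast
      then obtain j' where j': "j' < length (take i W)" "x = take i W ! j'" by (auto simp: in_set_conv_nth)
      then have "x = W!j'" "j' < i" using i by auto
      then have "r x = j'" using rW i by simp
      moreover have "r y = i" using rW i K(3) by simp
      ultimately show ?thesis using \<open>j' < i\<close> by simp
    qed
  qed
  have Asub: "A \<subseteq> V' \<times> V'"
  proof
    fix p assume "p \<in> A"
    then obtain x K where K: "K \<in> KK'" "x \<in> K" "p = (x, g K)" unfolding A_def by blast
    have setW: "set W = Inl ` V" unfolding W_def using setws by simp
    have "x \<in> V'" using K KK's setW unfolding V'_def by blast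
    moreover have "g K \<in> V'"
    proof -
      from g(2) K(1) have "g K \<in> S \<or> (\<exists>i<length W. g K = W!i \<and> K \<subseteq> set (take i W))" by (rule bspec)
      then show ?thesis
      proof
        assume "g K \<in> S" then show ?thesis unfolding S_def V'_def by blast
      next
        assume "\<exists>i<length W. g K = W!i \<and> K \<subseteq> set (take i W)"
        then obtain i where "i < length W" "g K = W!i" by blast
        then have "g K \<in> set W" by simp
        then show ?thesis using setW unfolding V'_def by blast
      qed
    qed
    ultimately show "p \<in> V' \<times> V'" using K by simp
  qed
  have inA: "(u, x) \<in> A \<longleftrightarrow> (\<exists>K\<in>KK'. u \<in> K \<and> x = g K)" for u x
    unfolding A_def by blast
  have CE: "competition_edges V' A = (\<lambda>e. Inl ` e) ` E"
  proof
    show "competition_edges V' A \<subseteq> (\<lambda>e. Inl ` e :: ('a + nat) set) ` E"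
    proof
      fix e assume "e \<in> competition_edges V' A"
      then obtain u v x where uv: "e = {u,v}" "u \<noteq> v" "(u,x) \<in> A" "(v,x) \<in> A"
        unfolding competition_edges_def by blast
      obtain K1 where K1: "K1 \<in> KK'" "u \<in> K1" "x = g K1" using uv(3) inA by blast
      obtain K2 where K2: "K2 \<in> KK'" "v \<in> K2" "x = g K2" using uv(4) inA by blast
      have "K1 = K2" using g(1) K1 K2 unfolding inj_on_def by metis
      then obtain K where K: "K \<in> KK" "u \<in> Inl ` K" "v \<in> Inl ` K"
        using K1 K2 unfolding KK'_def by blast
      then obtain a b where ab: "u = Inl a" "v = Inl b" "a \<in> K" "b \<in> K" by blast
      have "a \<noteq> b" using ab uv(2) by blast
      then have "{a,b} \<in> E" unfolding Eeq using ab K by blast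
      moreover have "e = Inl ` {a,b}" using uv ab by simp
      ultimately show "e \<in> (\<lambda>e. Inl ` e) ` E" by blast
    qed
    show "(\<lambda>e. Inl ` e) ` E \<subseteq> competition_edges V' A"
    proof
      fix e' :: "('a + nat) set" assume "e' \<in> (\<lambda>e. Inl ` e) ` E"
      then obtain e where e: "e \<in> E" "e' = Inl ` e" by blast
      then obtain a b K where abK: "e = {a,b}" "a \<noteq> b" "K \<in> KK" "a \<in> K" "b \<in> K"
        unfolding Eeq by blast
      have KK: "Inl ` K \<in> KK'" unfolding KK'_def using abK by blast
      have "(Inl a, g (Inl ` K)) \<in> A" "(Inl b, g (Inl ` K)) \<in> A"
        using inA KK abK by blast+
      moreover have "Inl a \<in> V'" "Inl b \<in> V'" using abK KKs unfolding V'_def by blast+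
      moreover have "e' = {Inl a, Inl b}" using e abK by simp
      ultimately show "e' \<in> competition_edges V' A"
        unfolding competition_edges_def using abK(2) by blast
    qed
  qed
  show ?thesis
    unfolding comp_with_isolated_def Let_def
    using Asub acyc_rank[OF rA] CE unfolding V'_def by blast
qed


lemma cnd_append:
  assumes c1: "cnd ws1 K1 k" and c2: "cnd ws2 K2 k" and cK2: "card K2 \<le> length ws2"
    and dis: "\<forall>K\<in>K1. K \<inter> set ws2 = {}" and f1: "finite K1" and f2: "finite K2"
  shows "cnd (ws1@ws2) (K1 \<union> K2) k"
  unfolding cnd_def
proof
  fix n
  show "card {K\<in>K1 \<union> K2. K \<inter> set (drop n (ws1@ws2)) \<noteq> {}} + 1 \<le> length (ws1@ws2) - n + k"
  proof (cases "length ws1 \<le> n")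
    case True
    have d: "drop n (ws1@ws2) = drop (n - length ws1) ws2" using True by simp
    have sd: "set (drop (n - length ws1) ws2) \<subseteq> set ws2" by (rule set_drop_subset)
    have "{K\<in>K1 \<union> K2. K \<inter> set (drop n (ws1@ws2)) \<noteq> {}} = {K\<in>K2. K \<inter> set (drop (n - length ws1) ws2) \<noteq> {}}"
      unfolding d using dis sd by blast
    moreover have "card {K\<in>K2. K \<inter> set (drop (n - length ws1) ws2) \<noteq> {}} + 1 \<le> length ws2 - (n - length ws1) + k"
      using c2 unfolding cnd_def by blast
    ultimately show ?thesis using True by simp
  next
    case False
    have d: "drop n (ws1@ws2) = drop n ws1 @ ws2" using False by simp
    have "{K\<in>K1 \<union> K2. K \<inter> set (drop n (ws1@ws2)) \<noteq> {}} \<subseteq> {K\<in>K1. K \<inter> set (drop n ws1) \<noteq> {}} \<union> K2"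
      unfolding d using dis by auto
    then have "card {K\<in>K1 \<union> K2. K \<inter> set (drop n (ws1@ws2)) \<noteq> {}} \<le> card ({K\<in>K1. K \<inter> set (drop n ws1) \<noteq> {}} \<union> K2)"
      by (rule card_mono[rotated]) (use f1 f2 in simp)
    also have "\<dots> \<le> card {K\<in>K1. K \<inter> set (drop n ws1) \<noteq> {}} + card K2" by (rule card_Un_le)
    finally have a: "card {K\<in>K1 \<union> K2. K \<inter> set (drop n (ws1@ws2)) \<noteq> {}} \<le> card {K\<in>K1. K \<inter> set (drop n ws1) \<noteq> {}} + card K2" .
    have b: "card {K\<in>K1. K \<inter> set (drop n ws1) \<noteq> {}} + 1 \<le> length ws1 - n + k"
      using c1 unfolding cnd_def by blast
    show ?thesis using a b cK2 False by simp
  qed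
qed

lemma double_count:
  fixes P :: "'b set set"
  assumes fP: "finite P" and two: "\<forall>e\<in>P. card e = 2" and deg: "\<forall>v\<in>D. 2 \<le> card {e\<in>P. v \<in> e}"
  shows "card D \<le> card P"
proof -
  have DU: "D \<subseteq> \<Union>P"
  proof
    fix v assume "v \<in> D"
    then have "2 \<le> card {e\<in>P. v \<in> e}" using deg by blast
    then have "{e\<in>P. v \<in> e} \<noteq> {}" by (metis card.empty not_numeral_le_zero)
    then show "v \<in> \<Union>P" by blast
  qed
  have fe: "finite e" if "e \<in> P" for e using two that card.infinite by fastforce
  have fD: "finite D" using DU fP fe by (meson finite_Union finite_subset)
  have "2 * card D = (\<Sum>v\<in>D. 2::nat)" by simp
  also have "\<dots> \<le> (\<Sum>v\<in>D. card {e\<in>P. v \<in> e})" by (rule sum_mono) (use deg in blast)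
  also have "\<dots> = (\<Sum>v\<in>D. \<Sum>e\<in>P. if v \<in> e then 1 else 0)"
    by (rule sum.cong[OF refl]) (simp add: sum.If_cases fP Int_def conj_commute)
  also have "\<dots> = (\<Sum>e\<in>P. \<Sum>v\<in>D. if v \<in> e then 1 else 0)" by (rule sum.swap)
  also have "\<dots> = (\<Sum>e\<in>P. card (D \<inter> e))"
    by (rule sum.cong[OF refl]) (simp add: sum.If_cases fD Int_def)
  also have "\<dots> \<le> (\<Sum>e\<in>P. 2)"
  proof (rule sum_mono)
    fix e assume "e \<in> P"
    then show "card (D \<inter> e) \<le> 2" using two fe card_mono[of e "D \<inter> e"] by fastforce
  qed
  also have "\<dots> = 2 * card P" by simp
  finally show ?thesis by simp
qed


lemma edge_order_gen:
  fixes HE :: "'b set set" and C :: "'b set"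
  assumes finHE: "finite HE" and two: "\<forall>e\<in>HE. card e = 2"
    and Cdeg: "\<forall>v\<in>C. 2 \<le> card {e\<in>HE. v \<in> e}"
  shows "R \<subseteq> HE \<Longrightarrow> card (C \<inter> \<Union>(HE - R)) \<le> card (HE - R) + 1 \<Longrightarrow>
    \<exists>es. distinct es \<and> set es = R \<and>
      (\<forall>n. card (C \<inter> (\<Union>(set (drop n es)) \<union> \<Union>(HE - R))) \<le> length es - n + card (HE - R) + 1)"
proof (induction "card R" arbitrary: R)
  case 0
  have "finite R" using 0 finHE finite_subset by blast
  then have "R = {}" using 0 by simp
  then show ?case using 0 by (intro exI[of _ "[]"]) simp
next
  case (Suc c)
  have fR: "finite R" using Suc.prems finHE finite_subset by blast
  define P where "P = HE - R"
  define U where "U = \<Union>P"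
  have fe: "finite e" if "e \<in> HE" for e using two that card.infinite by fastforce
  have fP: "finite P" unfolding P_def using finHE by simp
  have fU: "finite U" unfolding U_def P_def using finHE fe by auto
  have hyp: "card (C \<inter> U) \<le> card P + 1" using Suc.prems(2) unfolding U_def P_def .
  have Rne: "R \<noteq> {}" using Suc.hyps(2) by auto
  obtain e where eR: "e \<in> R" and ecard: "card (C \<inter> (e \<union> U)) \<le> card P + 2"
  proof (cases "\<exists>e\<in>R. \<exists>v\<in>e. v \<notin> C \<or> v \<in> U")
    case True
    then obtain e v where ev: "e \<in> R" "v \<in> e" "v \<notin> C \<or> v \<in> U" by blast
    have eHE: "e \<in> HE" using ev Suc.prems(1) by blast
    have "C \<inter> (e \<union> U) \<subseteq> (C \<inter> U) \<union> (e - {v})" using ev(3) by blast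
    then have "card (C \<inter> (e \<union> U)) \<le> card ((C \<inter> U) \<union> (e - {v}))"
      by (rule card_mono[rotated]) (use fU fe eHE in simp)
    also have "\<dots> \<le> card (C \<inter> U) + card (e - {v})" by (rule card_Un_le)
    also have "card (e - {v}) = 1" using two eHE ev(2) fe by (simp add: card_Diff_singleton)
    finally show ?thesis using that ev(1) hyp by simp
  next
    case False
    then have allnew: "\<forall>e\<in>R. \<forall>v\<in>e. v \<in> C \<and> v \<notin> U" by blast
    have le: "card (C \<inter> U) \<le> card P"
    proof (rule ccontr)
      assume "\<not> card (C \<inter> U) \<le> card P"
      moreover have "card (C \<inter> U) \<le> card P"
      proof -
        have "card (C \<inter> U) \<le> card P"
        proof (rule double_count[OF fP])
          show "\<forall>e\<in>P. card e = 2" using two unfolding P_def by blast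
          show "\<forall>v\<in>C \<inter> U. 2 \<le> card {e\<in>P. v \<in> e}"
          proof
            fix v assume v: "v \<in> C \<inter> U"
            have "{e\<in>P. v \<in> e} = {e\<in>HE. v \<in> e}"
              using allnew v unfolding P_def by blast
            then show "2 \<le> card {e\<in>P. v \<in> e}" using Cdeg v by simp
          qed
        qed
        then show ?thesis .
      qed
      ultimately show False by simp
    qed
    obtain e where eR: "e \<in> R" using Rne by blast
    have eHE: "e \<in> HE" using eR Suc.prems(1) by blast
    have "card (C \<inter> (e \<union> U)) \<le> card ((C \<inter> U) \<union> e)"
      by (rule card_mono) (use fU fe eHE in auto)
    also have "\<dots> \<le> card (C \<inter> U) + card e" by (rule card_Un_le)
    finally show ?thesis using that eR le two eHE by simp
  qed
  have eHE: "e \<in> HE" using eR Suc.prems(1) by blast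
  define R' where "R' = R - {e}"
  have cR': "c = card R'" unfolding R'_def using Suc.hyps(2) eR fR by simp
  have PR': "HE - R' = insert e P" unfolding R'_def P_def using eHE by blast
  have eP: "e \<notin> P" unfolding P_def using eR by blast
  have cP': "card (HE - R') = card P + 1" unfolding PR' using eP fP by simp
  have UR': "\<Union>(HE - R') = e \<union> U" unfolding PR' U_def by blast
  have R'HE: "R' \<subseteq> HE" unfolding R'_def using Suc.prems(1) by blast
  have cR'2: "card (C \<inter> \<Union>(HE - R')) \<le> card (HE - R') + 1" unfolding UR' cP' using ecard by simp
  have "\<exists>es. distinct es \<and> set es = R' \<and>
      (\<forall>n. card (C \<inter> (\<Union>(set (drop n es)) \<union> \<Union>(HE - R'))) \<le> length es - n + card (HE - R') + 1)"
    by (rule Suc.hyps(1)[OF cR' R'HE cR'2])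
  then obtain es' where es'0: "distinct es' \<and> set es' = R' \<and>
      (\<forall>n. card (C \<inter> (\<Union>(set (drop n es')) \<union> \<Union>(HE - R'))) \<le> length es' - n + card (HE - R') + 1)" ..
  have es': "distinct es'" "set es' = R'"
    "\<forall>n. card (C \<inter> (\<Union>(set (drop n es')) \<union> \<Union>(HE - R'))) \<le> length es' - n + card (HE - R') + 1"
    using es'0 by simp_all
  have eR': "e \<notin> set es'" using es'(2) unfolding R'_def by simp
  have cPR: "card (HE - R') = card (HE - R) + 1" using cP' unfolding P_def .
  show ?case
  proof (intro exI conjI allI)
    show "distinct (es' @ [e])" using es'(1) eR' by simp
    show "set (es' @ [e]) = R" using es'(2) eR unfolding R'_def by auto
    fix n
    show "card (C \<inter> (\<Union>(set (drop n (es' @ [e]))) \<union> \<Union>(HE - R))) \<le> length (es' @ [e]) - n + card (HE - R) + 1"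
    proof (cases "n \<le> length es'")
      case True
      have "set (drop n (es' @ [e])) = insert e (set (drop n es'))" using True by simp
      then have X: "\<Union>(set (drop n (es' @ [e]))) \<union> \<Union>(HE - R) = \<Union>(set (drop n es')) \<union> \<Union>(HE - R')"
        unfolding UR' U_def P_def by blast
      have "card (C \<inter> (\<Union>(set (drop n es')) \<union> \<Union>(HE - R'))) \<le> length es' - n + card (HE - R') + 1"
        using es'(3) by blast
      moreover have "length es' - n + card (HE - R') + 1 = length (es' @ [e]) - n + card (HE - R) + 1"
        using True cPR by simp
      ultimately show ?thesis unfolding X by linarith
    next
      case False
      then have "drop n (es' @ [e]) = []" by simp
      then have "\<Union>(set (drop n (es' @ [e]))) \<union> \<Union>(HE - R) = \<Union>(HE - R)" by simp
      then show ?thesis using Suc.prems(2) by simp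
    qed
  qed
qed

lemma edge_order:
  fixes HE :: "'b set set" and C :: "'b set"
  assumes finHE: "finite HE" and two: "\<forall>e\<in>HE. card e = 2"
    and Cdeg: "\<forall>v\<in>C. 2 \<le> card {e\<in>HE. v \<in> e}"
  shows "\<exists>es. distinct es \<and> set es = HE \<and> (\<forall>n. card (C \<inter> \<Union>(set (drop n es))) \<le> length es - n + 1)"
  using edge_order_gen[OF assms, of HE] by simp


definition Ev :: "'b set set \<Rightarrow> 'b \<Rightarrow> ('b set + ('b \<times> nat \<times> bool)) set" where
  "Ev HE v = Inl ` {e\<in>HE. v \<in> e}"
definition Qs :: "('b \<Rightarrow> nat) \<Rightarrow> 'b \<Rightarrow> bool \<Rightarrow> ('b set + ('b \<times> nat \<times> bool)) set" where
  "Qs f v a = (\<lambda>i. Inr (v, i, a)) ` {1..f v}"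
definition Pc :: "('b \<Rightarrow> nat) \<Rightarrow> 'b \<Rightarrow> nat \<Rightarrow> ('b set + ('b \<times> nat \<times> bool)) set" where
  "Pc f v j = insert (Inr (v, j, False)) ((\<lambda>i. Inr (v, i, True)) ` ({1..f v} - {j}))"
definition KB :: "'b set set \<Rightarrow> ('b \<Rightarrow> nat) \<Rightarrow> 'b \<Rightarrow> ('b set + ('b \<times> nat \<times> bool)) set set" where
  "KB HE f v = (if f v = 0 then {} else
     {K \<in> {Ev HE v \<union> Qs f v True, Ev HE v \<union> Qs f v False} \<union> Pc f v ` {1..f v}. 2 \<le> card K})"
definition blk :: "('b \<Rightarrow> nat) \<Rightarrow> 'b \<Rightarrow> ('b set + ('b \<times> nat \<times> bool)) list" where
  "blk f v = map (\<lambda>i. Inr (v, i, True)) [1..<f v + 1] @ map (\<lambda>i. Inr (v, i, False)) [1..<f v + 1]"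

lemma finite_KB: "finite (KB HE f v)"
  unfolding KB_def by auto

lemma card_KB_le:
  assumes "f v \<ge> 1"
  shows "card (KB HE f v) \<le> (if f v = 1 then 2 else f v + 2)"
proof (cases "f v = 1")
  case True
  have P1: "Pc f v 1 = {Inr (v, 1, False)}" unfolding Pc_def using True by simp
  have "KB HE f v \<subseteq> {Ev HE v \<union> Qs f v True, Ev HE v \<union> Qs f v False}"
  proof
    fix K assume K: "K \<in> KB HE f v"
    then have K2: "K \<in> {Ev HE v \<union> Qs f v True, Ev HE v \<union> Qs f v False} \<union> Pc f v ` {1..f v}" "2 \<le> card K"
      unfolding KB_def using True by (simp_all split: if_splits)
    have "K \<notin> Pc f v ` {1..f v}"
    proof
      assume "K \<in> Pc f v ` {1..f v}"
      then have "K = Pc f v 1" using True by simp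
      then show False using K2(2) P1 by simp
    qed
    then show "K \<in> {Ev HE v \<union> Qs f v True, Ev HE v \<union> Qs f v False}" using K2(1) by blast
  qed
  then have "card (KB HE f v) \<le> card {Ev HE v \<union> Qs f v True, Ev HE v \<union> Qs f v False}"
    by (rule card_mono[rotated]) simp
  also have "\<dots> \<le> 2" by (rule card_insert_le_m1) auto
  finally show ?thesis using True by simp
next
  case False
  have "KB HE f v \<subseteq> {Ev HE v \<union> Qs f v True, Ev HE v \<union> Qs f v False} \<union> Pc f v ` {1..f v}"
    unfolding KB_def by (simp split: if_splits) blast
  then have "card (KB HE f v) \<le> card ({Ev HE v \<union> Qs f v True, Ev HE v \<union> Qs f v False} \<union> Pc f v ` {1..f v})"
    by (rule card_mono[rotated]) simp
  also have "\<dots> \<le> card {Ev HE v \<union> Qs f v True, Ev HE v \<union> Qs f v False} + card (Pc f v ` {1..f v})"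
    by (rule card_Un_le)
  also have "card {Ev HE v \<union> Qs f v True, Ev HE v \<union> Qs f v False} \<le> 2" by (rule card_insert_le_m1) auto
  also have "card (Pc f v ` {1..f v}) \<le> f v" using card_image_le[of "{1..f v}" "Pc f v"] by simp
  finally show ?thesis using False by simp
qed

lemma cnd_blk: "cnd (blk f v) (KB HE f v) 2"
  unfolding cnd_def
proof
  fix n
  show "card {K\<in>KB HE f v. K \<inter> set (drop n (blk f v)) \<noteq> {}} + 1 \<le> length (blk f v) - n + 2"
  proof (cases "f v = 0")
    case True
    then have "KB HE f v = {}" unfolding KB_def by simp
    then show ?thesis by simp
  next
    case nz: False
    define m where "m = f v"
    have lb: "length (blk f v) = 2 * m" unfolding blk_def m_def by simp
    show ?thesis
    proof (cases "n < m")
      case True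
      have "card {K\<in>KB HE f v. K \<inter> set (drop n (blk f v)) \<noteq> {}} \<le> card (KB HE f v)"
        by (rule card_mono[OF finite_KB]) blast
      also have "\<dots> \<le> (if f v = 1 then 2 else f v + 2)" using card_KB_le[of f v HE] nz by linarith
      finally have c: "card {K\<in>KB HE f v. K \<inter> set (drop n (blk f v)) \<noteq> {}} \<le> (if m = 1 then 2 else m + 2)"
        unfolding m_def .
      have "(if m = 1 then 2 else m + 2) + 1 \<le> 2 * m - n + 2" using True nz m_def by (cases "m = 1") auto
      then show ?thesis using c lb by linarith
    next
      case False
      have d: "drop n (blk f v) = map (\<lambda>i. Inr (v, i, False)) [n - m + 1..<m + 1]"
        using False unfolding blk_def m_def by (simp add: drop_map)
      have sub: "{K\<in>KB HE f v. K \<inter> set (drop n (blk f v)) \<noteq> {}} \<subseteq>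
          insert (Ev HE v \<union> Qs f v False) (Pc f v ` {n - m + 1..m})"
      proof
        fix K assume K: "K \<in> {K\<in>KB HE f v. K \<inter> set (drop n (blk f v)) \<noteq> {}}"
        then obtain x where x: "x \<in> K" "x \<in> set (drop n (blk f v))" by blast
        then obtain i where i0: "i \<in> set [n - m + 1..<m + 1]" "x = Inr (v, i, False)"
          unfolding d by auto
        have i: "Inr (v, i, False) \<in> K" "n - m + 1 \<le> i" "i \<le> m" using i0 x by auto
        have "K \<in> {Ev HE v \<union> Qs f v True, Ev HE v \<union> Qs f v False} \<union> Pc f v ` {1..f v}"
          using K nz unfolding KB_def by auto
        moreover have "K \<noteq> Ev HE v \<union> Qs f v True" using i(1) unfolding Ev_def Qs_def by auto
        moreover have "K \<in> Pc f v ` {n - m + 1..m}" if KP: "K \<in> Pc f v ` {1..f v}"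
        proof -
          obtain j where j: "j \<in> {1..f v}" "K = Pc f v j" using KP by blast
          then have "i = j" using i(1) unfolding Pc_def by auto
          then show ?thesis using j i by auto
        qed
        ultimately show "K \<in> insert (Ev HE v \<union> Qs f v False) (Pc f v ` {n - m + 1..m})" by blast
      qed
      have "card {K\<in>KB HE f v. K \<inter> set (drop n (blk f v)) \<noteq> {}} \<le> card (insert (Ev HE v \<union> Qs f v False) (Pc f v ` {n - m + 1..m}))"
        by (rule card_mono[OF _ sub]) simp
      also have "\<dots> \<le> card (Pc f v ` {n - m + 1..m}) + 1" by (simp add: card_insert_le_m1 card_insert_if)
      also have "card (Pc f v ` {n - m + 1..m}) \<le> card {n - m + 1..m}" by (rule card_image_le) simp
      finally show ?thesis using False lb by simp
    qed
  qed
qed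


definition Qlist :: "('b \<Rightarrow> nat) \<Rightarrow> 'b list \<Rightarrow> ('b set + ('b \<times> nat \<times> bool)) list" where
  "Qlist f vs = concat (map (blk f) vs)"

lemma set_blk: fixes f :: "'b \<Rightarrow> nat" shows "set (blk f v) = {Inr (v, l, b) | l b. 1 \<le> l \<and> l \<le> f v}"
proof -
  have "set (blk f v) = (\<lambda>i. Inr (v, i, True)) ` {1..f v} \<union> (\<lambda>i. Inr (v, i, False)) ` {1..f v}"
    unfolding blk_def by (auto simp: atLeastLessThanSuc_atLeastAtMost)
  also have "\<dots> = {Inr (v, l, b) | l b. 1 \<le> l \<and> l \<le> f v}"
  proof
    show "(\<lambda>i. Inr (v, i, True)) ` {1..f v} \<union> (\<lambda>i. Inr (v, i, False)) ` {1..f v} \<subseteq> {Inr (v, l, b) | l b. 1 \<le> l \<and> l \<le> f v}"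
      by auto
    show "{Inr (v, l, b) | l b. 1 \<le> l \<and> l \<le> f v} \<subseteq> (\<lambda>i. Inr (v, i, True)) ` {1..f v} \<union> (\<lambda>i. Inr (v, i, False)) ` {1..f v}"
    proof
      fix x :: "'c + ('b \<times> nat \<times> bool)" assume "x \<in> {Inr (v, l, b) | l b. 1 \<le> l \<and> l \<le> f v}"
      then obtain l b where lb: "x = Inr (v, l, b)" "1 \<le> l" "l \<le> f v" by blast
      then show "x \<in> (\<lambda>i. Inr (v, i, True)) ` {1..f v} \<union> (\<lambda>i. Inr (v, i, False)) ` {1..f v}"
        by (cases b) auto
    qed
  qed
  finally show ?thesis .
qed

lemma KB_sub: "K \<in> KB HE f v \<Longrightarrow> K \<subseteq> Ev HE v \<union> {Inr (v, l, b) | l b. 1 \<le> l \<and> l \<le> f v}"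
  unfolding KB_def Qs_def Pc_def by (auto split: if_splits)

lemma card_KB_blk: "card (KB HE f v) \<le> length (blk f v)"
proof (cases "f v = 0")
  case True
  then show ?thesis unfolding KB_def by simp
next
  case False
  have "card (KB HE f v) \<le> (if f v = 1 then 2 else f v + 2)" using card_KB_le[of f v HE] False by simp
  moreover have "length (blk f v) = 2 * f v" unfolding blk_def by simp
  ultimately show ?thesis using False by (cases "f v = 1") auto
qed

lemma Qlist_cnd:
  "distinct vs \<Longrightarrow> cnd (Qlist f vs) (\<Union>v\<in>set vs. KB HE f v) 2 \<and>
     card (\<Union>v\<in>set vs. KB HE f v) \<le> length (Qlist f vs)"
proof (induction vs)
  case Nil
  then show ?case unfolding cnd_def Qlist_def by simp
next
  case (Cons v vs)
  have IH: "cnd (Qlist f vs) (\<Union>v\<in>set vs. KB HE f v) 2" "card (\<Union>v\<in>set vs. KB HE f v) \<le> length (Qlist f vs)"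
    using Cons by auto
  have vn: "v \<notin> set vs" using Cons.prems by simp
  have fin2: "finite (\<Union>v\<in>set vs. KB HE f v)" using finite_KB by auto
  have dis: "\<forall>K\<in>KB HE f v. K \<inter> set (Qlist f vs) = {}"
  proof
    fix K assume K: "K \<in> KB HE f v"
    have "set (Qlist f vs) = (\<Union>w\<in>set vs. set (blk f w))" unfolding Qlist_def by simp
    then show "K \<inter> set (Qlist f vs) = {}" using KB_sub[OF K] vn unfolding set_blk Ev_def by auto
  qed
  have eq1: "Qlist f (v # vs) = blk f v @ Qlist f vs" unfolding Qlist_def by simp
  have eq2: "(\<Union>v\<in>set (v # vs). KB HE f v) = KB HE f v \<union> (\<Union>v\<in>set vs. KB HE f v)" by simp
  have "cnd (blk f v @ Qlist f vs) (KB HE f v \<union> (\<Union>v\<in>set vs. KB HE f v)) 2"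
    by (rule cnd_append[OF cnd_blk IH(1) IH(2) dis finite_KB fin2])
  moreover have "card (KB HE f v \<union> (\<Union>v\<in>set vs. KB HE f v)) \<le> length (blk f v @ Qlist f vs)"
  proof -
    have "card (KB HE f v \<union> (\<Union>v\<in>set vs. KB HE f v)) \<le> card (KB HE f v) + card (\<Union>v\<in>set vs. KB HE f v)"
      by (rule card_Un_le)
    then show ?thesis using card_KB_blk[of HE f v] IH(2) by simp
  qed
  ultimately show ?case unfolding eq1 eq2 by simp
qed


lemma adj_ll: "e \<in> HE \<Longrightarrow> e' \<in> HE \<Longrightarrow> e \<noteq> e' \<Longrightarrow> w \<in> e \<Longrightarrow> w \<in> e' \<Longrightarrow>
    {Inl e, Inl e'} \<in> glg_edges HV HE f"
  unfolding glg_edges_def by (rule UnI1, rule UnI1, intro CollectI exI[of _ e] exI[of _ e']) blast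

lemma adj_rr: "w \<in> HV \<Longrightarrow> 1 \<le> i \<Longrightarrow> i \<le> f w \<Longrightarrow> 1 \<le> j \<Longrightarrow> j \<le> f w \<Longrightarrow> i \<noteq> j \<Longrightarrow>
    {Inr (w, i, a), Inr (w, j, b)} \<in> glg_edges HV HE f"
  unfolding glg_edges_def by (rule UnI1, rule UnI2, intro CollectI exI[of _ w] exI[of _ i] exI[of _ j] exI[of _ a] exI[of _ b]) simp

lemma adj_lr: "e \<in> HE \<Longrightarrow> w \<in> e \<Longrightarrow> w \<in> HV \<Longrightarrow> 1 \<le> i \<Longrightarrow> i \<le> f w \<Longrightarrow>
    {Inl e, Inr (w, i, a)} \<in> glg_edges HV HE f"
  unfolding glg_edges_def by (rule UnI2, intro CollectI exI[of _ e] exI[of _ w] exI[of _ i] exI[of _ a]) simp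

lemma adj_rl: "e \<in> HE \<Longrightarrow> w \<in> e \<Longrightarrow> w \<in> HV \<Longrightarrow> 1 \<le> i \<Longrightarrow> i \<le> f w \<Longrightarrow>
    {Inr (w, i, a), Inl e} \<in> glg_edges HV HE f"
  using adj_lr[of e HE w HV i f a] by (simp add: insert_commute)

definition CL :: "'b set \<Rightarrow> 'b set set \<Rightarrow> ('b \<Rightarrow> nat) \<Rightarrow> 'b set" where
  "CL HV HE f = {v\<in>HV. f v = 0 \<and> 2 \<le> card {e\<in>HE. v \<in> e}}"

definition KKall :: "'b set \<Rightarrow> 'b set set \<Rightarrow> ('b \<Rightarrow> nat) \<Rightarrow> ('b set + ('b \<times> nat \<times> bool)) set set" where
  "KKall HV HE f = Ev HE ` CL HV HE f \<union> (\<Union>v\<in>HV. KB HE f v)"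

lemma clique_EQ:
  assumes v0: "v0 \<in> HV" and u: "u \<in> Ev HE v0 \<union> Qs f v0 a" and w: "w \<in> Ev HE v0 \<union> Qs f v0 a" and uw: "u \<noteq> w"
  shows "{u, w} \<in> glg_edges HV HE f"
proof -
  consider (l) e where "u = Inl e" "e \<in> HE" "v0 \<in> e" | (r) i where "u = Inr (v0, i, a)" "1 \<le> i" "i \<le> f v0"
    using u unfolding Ev_def Qs_def by auto
  then show ?thesis
  proof cases
    case l
    consider (l) e' where "w = Inl e'" "e' \<in> HE" "v0 \<in> e'" | (r) j where "w = Inr (v0, j, a)" "1 \<le> j" "j \<le> f v0"
      using w unfolding Ev_def Qs_def by auto
    then show ?thesis
    proof cases
      case l2: l then show ?thesis using l uw by (auto intro: adj_ll)
    next
      case r2: r then show ?thesis using l v0 by (auto intro: adj_lr)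
    qed
  next
    case r
    consider (l) e' where "w = Inl e'" "e' \<in> HE" "v0 \<in> e'" | (r) j where "w = Inr (v0, j, a)" "1 \<le> j" "j \<le> f v0"
      using w unfolding Ev_def Qs_def by auto
    then show ?thesis
    proof cases
      case l2: l then show ?thesis using r v0 by (auto intro: adj_rl)
    next
      case r2: r then show ?thesis using r v0 uw by (auto intro: adj_rr)
    qed
  qed
qed

lemma clique_Pc:
  assumes z: "z \<in> HV" and j: "j \<in> {1..f z}" and u: "u \<in> Pc f z j" and w: "w \<in> Pc f z j" and uw: "u \<noteq> w"
  shows "{u, w} \<in> glg_edges HV HE f"
proof -
  have "u = Inr (z, j, False) \<or> (\<exists>i\<in>{1..f z} - {j}. u = Inr (z, i, True))"
    using u unfolding Pc_def by blast
  then consider (y) "u = Inr (z, j, False)" | (x) i where "u = Inr (z, i, True)" "i \<in> {1..f z}" "i \<noteq> j"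
    by blast
  then show ?thesis
  proof cases
    case y
    have "w = Inr (z, j, False) \<or> (\<exists>i\<in>{1..f z} - {j}. w = Inr (z, i, True))"
      using w unfolding Pc_def by blast
    then consider (y) "w = Inr (z, j, False)" | (x) i where "w = Inr (z, i, True)" "i \<in> {1..f z}" "i \<noteq> j"
      by blast
    then show ?thesis
    proof cases
      case y2: y then show ?thesis using y uw by simp
    next
      case x2: x then show ?thesis using y z j by (auto intro: adj_rr)
    qed
  next
    case x
    have "w = Inr (z, j, False) \<or> (\<exists>i\<in>{1..f z} - {j}. w = Inr (z, i, True))"
      using w unfolding Pc_def by blast
    then consider (y) "w = Inr (z, j, False)" | (x) i' where "w = Inr (z, i', True)" "i' \<in> {1..f z}" "i' \<noteq> j"
      by blast
    then show ?thesis
    proof cases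
      case y2: y then show ?thesis using x z j by (auto intro: adj_rr)
    next
      case x2: x then show ?thesis using x z uw by (auto intro: adj_rr)
    qed
  qed
qed

lemma clique_KK:
  assumes K: "K \<in> KKall HV HE f" and u: "u \<in> K" and w: "w \<in> K" and uw: "u \<noteq> w"
  shows "{u, w} \<in> glg_edges HV HE f"
proof -
  from K consider (L) v0 where "v0 \<in> CL HV HE f" "K = Ev HE v0" | (B) v0 where "v0 \<in> HV" "K \<in> KB HE f v0"
    unfolding KKall_def by blast
  then show ?thesis
  proof cases
    case L
    then have v0: "v0 \<in> HV" unfolding CL_def by simp
    have "u \<in> Ev HE v0 \<union> Qs f v0 True" "w \<in> Ev HE v0 \<union> Qs f v0 True" using L u w by auto
    then show ?thesis by (rule clique_EQ[OF v0]) (use uw in auto)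
  next
    case B
    then have "K \<in> {Ev HE v0 \<union> Qs f v0 True, Ev HE v0 \<union> Qs f v0 False} \<union> Pc f v0 ` {1..f v0}"
      unfolding KB_def by (simp split: if_splits)
    then consider (X) a where "K = Ev HE v0 \<union> Qs f v0 a" | (P) j where "j \<in> {1..f v0}" "K = Pc f v0 j"
      by blast
    then show ?thesis
    proof cases
      case X show ?thesis by (rule clique_EQ[OF B(1)]) (use u w uw X in auto)
    next
      case P show ?thesis by (rule clique_Pc[where z=v0 and j=j and f=f and HV=HV, OF B(1) P(1)]) (use u w uw P(2) in auto)
    qed
  qed
qed

lemma card2: "finite K \<Longrightarrow> a \<in> K \<Longrightarrow> b \<in> K \<Longrightarrow> a \<noteq> b \<Longrightarrow> 2 \<le> card K"
  using card_mono[of K "{a,b}"] by simp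

lemma finite_EQ: "finite HE \<Longrightarrow> finite (Ev HE v \<union> Qs f v a)"
  unfolding Ev_def Qs_def by simp

lemma sg_edge:
  assumes "simple_graph V E" "e \<in> E"
  shows "\<exists>u v. e = {u,v} \<and> u \<noteq> v \<and> u \<in> V \<and> v \<in> V"
proof -
  have "\<forall>e\<in>E. \<exists>u v. e = {u,v} \<and> u \<noteq> v \<and> u \<in> V \<and> v \<in> V"
    using assms(1) unfolding simple_graph_def by (rule conjunct2)
  then show ?thesis using assms(2) by (rule bspec)
qed

lemma sg_sub: "simple_graph V E \<Longrightarrow> e \<in> E \<Longrightarrow> e \<subseteq> V"
  using sg_edge by fastforce

lemma sg_card: "simple_graph V E \<Longrightarrow> e \<in> E \<Longrightarrow> card e = 2"
  using sg_edge by fastforce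

lemma sg_finV: "simple_graph V E \<Longrightarrow> finite V"
  unfolding simple_graph_def by (rule conjunct1)

lemma sg_finE: "simple_graph V E \<Longrightarrow> finite E"
proof -
  assume a: "simple_graph V E"
  have "E \<subseteq> Pow V" using sg_sub[OF a] by blast
  then show ?thesis using sg_finV[OF a] by (meson finite_Pow_iff finite_subset)
qed

lemma in_pairs:
  assumes "u \<noteq> w" "K \<in> KK" "u \<in> K" "w \<in> K"
  shows "{u, w} \<in> {{u, w} | u w. u \<noteq> w \<and> (\<exists>K\<in>KK. u \<in> K \<and> w \<in> K)}"
  by (rule CollectI, rule exI[of _ u], rule exI[of _ w]) (use assms in blast)

lemma cover_KK:
  assumes sg: "simple_graph HV HE"
  shows "glg_edges HV HE f = {{u, w} | u w. u \<noteq> w \<and> (\<exists>K\<in>KKall HV HE f. u \<in> K \<and> w \<in> K)}"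
proof
  have finHE: "finite HE" using sg_finE[OF sg] .
  have eHV: "e \<subseteq> HV" if "e \<in> HE" for e using sg_sub[OF sg that] .
  show "{{u, w} | u w. u \<noteq> w \<and> (\<exists>K\<in>KKall HV HE f. u \<in> K \<and> w \<in> K)} \<subseteq> glg_edges HV HE f"
  proof
    fix x assume "x \<in> {{u, w} | u w. u \<noteq> w \<and> (\<exists>K\<in>KKall HV HE f. u \<in> K \<and> w \<in> K)}"
    then obtain u w K where "x = {u, w}" "u \<noteq> w" "K \<in> KKall HV HE f" "u \<in> K" "w \<in> K" by blast
    then show "x \<in> glg_edges HV HE f" using clique_KK by blast
  qed
  show "glg_edges HV HE f \<subseteq> {{u, w} | u w. u \<noteq> w \<and> (\<exists>K\<in>KKall HV HE f. u \<in> K \<and> w \<in> K)}"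
  proof
    fix x assume "x \<in> glg_edges HV HE f"
    then have "(x \<in> {{Inl e, Inl e'} | e e'. e \<in> HE \<and> e' \<in> HE \<and> e \<noteq> e' \<and> e \<inter> e' \<noteq> {}}
      \<or> x \<in> {{Inr (v, i, a), Inr (v, j, b)} | v i j a b. v \<in> HV \<and> 1 \<le> i \<and> i \<le> f v \<and>
        1 \<le> j \<and> j \<le> f v \<and> i \<noteq> j})
      \<or> x \<in> {{Inl e, Inr (v, i, a)} | e v i a. e \<in> HE \<and> v \<in> e \<and> v \<in> HV \<and> 1 \<le> i \<and> i \<le> f v}"
      unfolding glg_edges_def Un_iff .
    then consider (LL) e e' where "x = {Inl e, Inl e'}" "e \<in> HE" "e' \<in> HE" "e \<noteq> e'" "e \<inter> e' \<noteq> {}"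
      | (RR) v i j a b where "x = {Inr (v, i, a), Inr (v, j, b)}" "v \<in> HV" "1 \<le> i" "i \<le> f v" "1 \<le> j" "j \<le> f v" "i \<noteq> j"
      | (LR) e v i a where "x = {Inl e, Inr (v, i, a)}" "e \<in> HE" "v \<in> e" "v \<in> HV" "1 \<le> i" "i \<le> f v"
    proof (elim disjE)
      assume "x \<in> {{Inl e, Inl e'} | e e'. e \<in> HE \<and> e' \<in> HE \<and> e \<noteq> e' \<and> e \<inter> e' \<noteq> {}}"
      then obtain e e' where "x = {Inl e, Inl e'}" "e \<in> HE" "e' \<in> HE" "e \<noteq> e'" "e \<inter> e' \<noteq> {}"
        unfolding mem_Collect_eq by (elim exE conjE) simp
      then show thesis using that(1) by simp
    next
      assume "x \<in> {{Inr (v, i, a), Inr (v, j, b)} | v i j a b. v \<in> HV \<and> 1 \<le> i \<and> i \<le> f v \<and>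
        1 \<le> j \<and> j \<le> f v \<and> i \<noteq> j}"
      then obtain v i j a b where "x = {Inr (v, i, a), Inr (v, j, b)}" "v \<in> HV" "1 \<le> i" "i \<le> f v" "1 \<le> j" "j \<le> f v" "i \<noteq> j"
        unfolding mem_Collect_eq by (elim exE conjE) simp
      then show thesis using that(2) by simp
    next
      assume "x \<in> {{Inl e, Inr (v, i, a)} | e v i a. e \<in> HE \<and> v \<in> e \<and> v \<in> HV \<and> 1 \<le> i \<and> i \<le> f v}"
      then obtain e v i a where "x = {Inl e, Inr (v, i, a)}" "e \<in> HE" "v \<in> e" "v \<in> HV" "1 \<le> i" "i \<le> f v"
        unfolding mem_Collect_eq by (elim exE conjE) simp
      then show thesis using that(3) by simp
    qed
    then show "x \<in> {{u, w} | u w. u \<noteq> w \<and> (\<exists>K\<in>KKall HV HE f. u \<in> K \<and> w \<in> K)}"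
    proof cases
      case LL
      then obtain v where v: "v \<in> e" "v \<in> e'" by blast
      have vHV: "v \<in> HV" using v eHV LL by blast
      have inE: "Inl e \<in> Ev HE v" "Inl e' \<in> Ev HE v" unfolding Ev_def using LL v by auto
      have "\<exists>K\<in>KKall HV HE f. Inl e \<in> K \<and> Inl e' \<in> K"
      proof (cases "f v = 0")
        case True
        have "2 \<le> card {e\<in>HE. v \<in> e}" by (rule card2[of _ e e']) (use finHE LL v in auto)
        then have "v \<in> CL HV HE f" unfolding CL_def using vHV True by simp
        then show ?thesis using inE unfolding KKall_def by blast
      next
        case False
        have "2 \<le> card (Ev HE v \<union> Qs f v True)"
          by (rule card2[where a="Inl e" and b="Inl e'", OF finite_EQ[OF finHE]]) (use inE LL in auto)
        then have "Ev HE v \<union> Qs f v True \<in> KB HE f v" unfolding KB_def using False by simp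
        then show ?thesis using inE vHV unfolding KKall_def by blast
      qed
      then show ?thesis using LL by blast
    next
      case RR
      have fv: "f v \<noteq> 0" using RR(3) RR(4) by linarith
      have K: "\<exists>K\<in>KKall HV HE f. Inr (v, i, a) \<in> K \<and> Inr (v, j, b) \<in> K"
      proof -
        have mem: "K \<in> KKall HV HE f" if "K \<in> {Ev HE v \<union> Qs f v True, Ev HE v \<union> Qs f v False} \<union> Pc f v ` {1..f v}"
          "Inr (v, i, a) \<in> K" "Inr (v, j, b) \<in> K" "finite K" for K
        proof -
          have ne: "Inr (v, i, a) \<noteq> Inr (v, j, b)" using RR(7) by simp
          have c2: "2 \<le> card K" using card2[OF that(4) that(2) that(3) ne] .
          have KBe: "KB HE f v = {K \<in> {Ev HE v \<union> Qs f v True, Ev HE v \<union> Qs f v False} \<union> Pc f v ` {1..f v}. 2 \<le> card K}"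
            unfolding KB_def using fv by simp
          have "K \<in> KB HE f v" unfolding KBe mem_Collect_eq using that(1) c2 by (rule conjI)
          then show ?thesis unfolding KKall_def using RR(2) by blast
        qed
        have fP: "finite (Pc f v j')" for j' unfolding Pc_def by (intro finite.insertI finite_imageI) simp
        show ?thesis
        proof (cases a; cases b)
          assume ab: "a" "b"
          let ?K = "Ev HE v \<union> Qs f v True"
          have m: "Inr (v, i, a) \<in> ?K" "Inr (v, j, b) \<in> ?K" unfolding Qs_def using RR ab by auto
          have Kin: "?K \<in> KKall HV HE f" by (rule mem) (use m finite_EQ[OF finHE] in auto)
          show ?thesis by (rule bexI[OF _ Kin]) (use m in simp)
        next
          assume ab: "\<not> a" "\<not> b"
          let ?K = "Ev HE v \<union> Qs f v False"
          have m: "Inr (v, i, a) \<in> ?K" "Inr (v, j, b) \<in> ?K" unfolding Qs_def using RR ab by auto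
          have Kin: "?K \<in> KKall HV HE f" by (rule mem) (use m finite_EQ[OF finHE] in auto)
          show ?thesis by (rule bexI[OF _ Kin]) (use m in simp)
        next
          assume ab: "a" "\<not> b"
          let ?K = "Pc f v j"
          have m: "Inr (v, i, a) \<in> ?K" "Inr (v, j, b) \<in> ?K" unfolding Pc_def using RR ab by auto
          have Kin: "?K \<in> KKall HV HE f" by (rule mem) (use m fP RR in auto)
          show ?thesis by (rule bexI[OF _ Kin]) (use m in simp)
        next
          assume ab: "\<not> a" "b"
          let ?K = "Pc f v i"
          have m: "Inr (v, i, a) \<in> ?K" "Inr (v, j, b) \<in> ?K" unfolding Pc_def using RR ab by auto
          have Kin: "?K \<in> KKall HV HE f" by (rule mem) (use m fP RR in auto)
          show ?thesis by (rule bexI[OF _ Kin]) (use m in simp)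
        qed
      qed
      then obtain K where K: "K \<in> KKall HV HE f" "Inr (v, i, a) \<in> K" "Inr (v, j, b) \<in> K" by blast
      have ne: "Inr (v, i, a) \<noteq> Inr (v, j, b)" using RR(7) by simp
      show ?thesis unfolding RR(1) using in_pairs[OF ne K(1) K(2) K(3)] .
    next
      case LR
      let ?K = "Ev HE v \<union> Qs f v a"
      have m: "Inl e \<in> ?K" "Inr (v, i, a) \<in> ?K"
        unfolding Ev_def Qs_def using LR by auto
      have c2: "2 \<le> card ?K"
        by (rule card2[OF finite_EQ[OF finHE] m]) simp
      have fv: "f v \<noteq> 0" using LR(5) LR(6) by linarith
      have KBe: "KB HE f v = {K \<in> {Ev HE v \<union> Qs f v True, Ev HE v \<union> Qs f v False} \<union> Pc f v ` {1..f v}. 2 \<le> card K}"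
        unfolding KB_def using fv by simp
      have "?K \<in> {Ev HE v \<union> Qs f v True, Ev HE v \<union> Qs f v False}" by (cases a) simp_all
      then have "?K \<in> KB HE f v" unfolding KBe using c2 by blast
      then have Kin: "?K \<in> KKall HV HE f" unfolding KKall_def using LR(4) by blast
      have ne: "Inl e \<noteq> Inr (v, i, a)" by simp
      show ?thesis unfolding LR(1) using in_pairs[OF ne Kin m(1) m(2)] .
    qed
  qed
qed


lemma distinct_blk: fixes f :: "'b \<Rightarrow> nat" and v :: 'b shows "distinct (blk f v)"
proof -
  have "inj_on (\<lambda>i. Inr (v, i, True) :: 'b set + ('b \<times> nat \<times> bool)) (set [1..<f v + 1])" by (rule inj_onI) simp
  moreover have "inj_on (\<lambda>i. Inr (v, i, False) :: 'b set + ('b \<times> nat \<times> bool)) (set [1..<f v + 1])" by (rule inj_onI) simp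
  ultimately show ?thesis unfolding blk_def by (auto simp: distinct_map)
qed

lemma distinct_Qlist: "distinct vs \<Longrightarrow> distinct (Qlist f vs)"
proof (induction vs)
  case Nil then show ?case unfolding Qlist_def by simp
next
  case (Cons v vs)
  have eq: "Qlist f (v # vs) = blk f v @ Qlist f vs" unfolding Qlist_def by simp
  have sQ: "set (Qlist f vs) = (\<Union>w\<in>set vs. set (blk f w))" unfolding Qlist_def by simp
  have "set (blk f v) \<inter> set (Qlist f vs) = {}" unfolding sQ set_blk using Cons.prems by auto
  then show ?case unfolding eq using distinct_blk[of f v] Cons by simp
qed

lemma set_Qlist: "set (Qlist f vs) = {Inr (v, l, b) | v l b. v \<in> set vs \<and> 1 \<le> l \<and> l \<le> f v}"
  unfolding Qlist_def by (auto simp: set_blk)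

lemma glg_data:
  fixes HV :: "'b set" and HE :: "'b set set" and f :: "'b \<Rightarrow> nat"
  assumes sg: "simple_graph HV HE"
  shows "\<exists>ws KK. distinct ws \<and> set ws = glg_verts HV HE f \<and> (\<forall>K\<in>KK. K \<noteq> {} \<and> K \<subseteq> glg_verts HV HE f)
    \<and> glg_edges HV HE f = {{u, w} | u w. u \<noteq> w \<and> (\<exists>K\<in>KK. u \<in> K \<and> w \<in> K)} \<and> cnd ws KK 2"
proof -
  have finHE: "finite HE" using sg_finE[OF sg] .
  have finHV: "finite HV" using sg_finV[OF sg] .
  have two: "\<forall>e\<in>HE. card e = 2" using sg_card[OF sg] by blast
  have Cdeg: "\<forall>v\<in>CL HV HE f. 2 \<le> card {e\<in>HE. v \<in> e}" unfolding CL_def by blast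
  obtain es where es: "distinct es" "set es = HE" "\<forall>n. card (CL HV HE f \<inter> \<Union>(set (drop n es))) \<le> length es - n + 1"
    using edge_order[OF finHE two Cdeg] by blast
  obtain vs where vs: "distinct vs" "set vs = HV" using finite_distinct_list[OF finHV] by blast
  define ws where "ws = map Inl es @ Qlist f vs"
  have finCL: "finite (CL HV HE f)" unfolding CL_def using finHV by simp
  have KKeq: "KKall HV HE f = Ev HE ` CL HV HE f \<union> (\<Union>v\<in>set vs. KB HE f v)"
    unfolding KKall_def vs(2) ..
  have c1: "cnd (map Inl es) (Ev HE ` CL HV HE f) 2"
    unfolding cnd_def
  proof
    fix n
    have sub: "{K\<in>Ev HE ` CL HV HE f. K \<inter> set (drop n (map Inl es)) \<noteq> {}} \<subseteq> Ev HE ` (CL HV HE f \<inter> \<Union>(set (drop n es)))"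
    proof
      fix K assume K: "K \<in> {K\<in>Ev HE ` CL HV HE f. K \<inter> set (drop n (map Inl es)) \<noteq> {}}"
      then obtain v where v: "v \<in> CL HV HE f" "K = Ev HE v" by blast
      from K obtain x where x: "x \<in> K" "x \<in> set (drop n (map Inl es))" by blast
      then obtain e where e: "x = Inl e" "e \<in> set (drop n es)" by (auto simp: drop_map)
      have "v \<in> e" using x(1) v(2) e(1) unfolding Ev_def by auto
      then have "v \<in> \<Union>(set (drop n es))" using e(2) by blast
      then show "K \<in> Ev HE ` (CL HV HE f \<inter> \<Union>(set (drop n es)))" using v by blast
    qed
    have "card {K\<in>Ev HE ` CL HV HE f. K \<inter> set (drop n (map Inl es)) \<noteq> {}} \<le> card (Ev HE ` (CL HV HE f \<inter> \<Union>(set (drop n es))))"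
      by (rule card_mono[OF _ sub]) (use finCL in simp)
    also have "\<dots> \<le> card (CL HV HE f \<inter> \<Union>(set (drop n es)))" by (rule card_image_le) (use finCL in simp)
    also have "\<dots> \<le> length es - n + 1" using es(3) by blast
    finally show "card {K\<in>Ev HE ` CL HV HE f. K \<inter> set (drop n (map Inl es)) \<noteq> {}} + 1 \<le> length (map Inl es) - n + 2"
      by simp
  qed
  have Q: "cnd (Qlist f vs) (\<Union>v\<in>set vs. KB HE f v) 2" "card (\<Union>v\<in>set vs. KB HE f v) \<le> length (Qlist f vs)"
    using Qlist_cnd[OF vs(1)] by blast+
  have dis: "\<forall>K\<in>Ev HE ` CL HV HE f. K \<inter> set (Qlist f vs) = {}"
  proof
    fix K assume "K \<in> Ev HE ` CL HV HE f"
    then have "K \<subseteq> range Inl" unfolding Ev_def by blast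
    moreover have "set (Qlist f vs) \<subseteq> range Inr" unfolding set_Qlist by blast
    ultimately show "K \<inter> set (Qlist f vs) = {}" by blast
  qed
  have fin2: "finite (\<Union>v\<in>set vs. KB HE f v)" by (rule finite_UN_I) (simp_all add: finite_KB)
  have cn: "cnd ws (KKall HV HE f) 2"
    unfolding ws_def KKeq by (rule cnd_append[OF c1 Q(1) Q(2) dis]) (use finCL fin2 in simp_all)
  have dws: "distinct ws"
  proof -
    have "distinct (map Inl es :: ('b set + ('b \<times> nat \<times> bool)) list)" using es(1) by (simp add: distinct_map)
    moreover have "distinct (Qlist f vs)" using distinct_Qlist[OF vs(1)] .
    moreover have "set (map Inl es :: ('b set + ('b \<times> nat \<times> bool)) list) \<inter> set (Qlist f vs) = {}"
      unfolding set_Qlist by auto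
    ultimately show ?thesis unfolding ws_def by simp
  qed
  have sws: "set ws = glg_verts HV HE f"
    unfolding ws_def glg_verts_def set_append set_Qlist vs(2) using es(2) by simp
  have Ks: "\<forall>K\<in>KKall HV HE f. K \<noteq> {} \<and> K \<subseteq> glg_verts HV HE f"
  proof
    fix K assume K: "K \<in> KKall HV HE f"
    then consider (L) v where "v \<in> CL HV HE f" "K = Ev HE v" | (B) v where "v \<in> HV" "K \<in> KB HE f v"
      unfolding KKall_def by blast
    then show "K \<noteq> {} \<and> K \<subseteq> glg_verts HV HE f"
    proof cases
      case L
      have "2 \<le> card {e\<in>HE. v \<in> e}" using L(1) unfolding CL_def by blast
      then have "{e\<in>HE. v \<in> e} \<noteq> {}" by (metis card.empty not_numeral_le_zero)
      then have "K \<noteq> {}" unfolding L(2) Ev_def by blast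
      moreover have "K \<subseteq> Inl ` HE" unfolding L(2) Ev_def by blast
      moreover have "Inl ` HE \<subseteq> glg_verts HV HE f" unfolding glg_verts_def by (rule Un_upper1)
      ultimately show ?thesis by blast
    next
      case B
      have "2 \<le> card K" using B(2) unfolding KB_def by (simp split: if_splits)
      then have "K \<noteq> {}" by (metis card.empty not_numeral_le_zero)
      moreover have "K \<subseteq> glg_verts HV HE f"
      proof
        fix x assume "x \<in> K"
        then have "x \<in> Ev HE v \<union> {Inr (v, l, b) | l b. 1 \<le> l \<and> l \<le> f v}" using KB_sub[OF B(2)] by blast
        then consider (l) e where "x = Inl e" "e \<in> HE" | (r) l b where "x = Inr (v, l, b)" "1 \<le> l" "l \<le> f v"
          unfolding Ev_def by blast
        then show "x \<in> glg_verts HV HE f"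
        proof cases
          case l then show ?thesis unfolding glg_verts_def by simp
        next
          case r then show ?thesis unfolding glg_verts_def using B(1) by simp
        qed
      qed
      ultimately show ?thesis by blast
    qed
  qed
  show ?thesis
    by (rule exI[of _ ws], rule exI[of _ "KKall HV HE f"]) (intro conjI dws sws Ks cover_KK[OF sg] cn)
qed

lemma transfer:
  fixes V :: "'a set" and E :: "'a set set" and W :: "'c set" and F :: "'c set set"
  assumes iso: "graph_iso V E W F" and sgV: "simple_graph V E"
    and dws: "distinct ws" and sws: "set ws = W" and Ks: "\<forall>K\<in>KK. K \<noteq> {} \<and> K \<subseteq> W"
    and Feq: "F = {{u, w} | u w. u \<noteq> w \<and> (\<exists>K\<in>KK. u \<in> K \<and> w \<in> K)}"
    and cn: "cnd ws KK k"
  shows "comp_with_isolated V E k"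
proof -
  obtain \<phi> where bij: "bij_betw \<phi> V W" and adj: "\<forall>u\<in>V. \<forall>v\<in>V. {u, v} \<in> E \<longleftrightarrow> {\<phi> u, \<phi> v} \<in> F"
    using iso unfolding graph_iso_def by blast
  define \<psi> where "\<psi> = inv_into V \<phi>"
  have bijp: "bij_betw \<psi> W V" unfolding \<psi>_def using bij by (rule bij_betw_inv_into)
  have injp: "inj_on \<psi> W" using bijp by (rule bij_betw_imp_inj_on)
  have pW: "\<psi> ` W = V" using bijp by (rule bij_betw_imp_surj_on)
  have phipsi: "\<phi> (\<psi> a) = a" if "a \<in> W" for a
    unfolding \<psi>_def using that bij by (simp add: bij_betw_def f_inv_into_f)
  have psiphi: "\<psi> (\<phi> u) = u" if "u \<in> V" for u
    unfolding \<psi>_def using that bij by (simp add: bij_betw_def inv_into_f_f)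
  have phiW: "\<phi> u \<in> W" if "u \<in> V" for u using bij that by (rule bij_betw_apply)
  have finKK: "finite KK" by (rule finite_subset[of _ "Pow W"]) (use Ks sws in auto)
  define KK' where "KK' = (\<lambda>K. \<psi> ` K) ` KK"
  show ?thesis
  proof (rule realize[of "map \<psi> ws" V KK' E k])
    show "distinct (map \<psi> ws)" using dws injp sws by (simp add: distinct_map)
    show "set (map \<psi> ws) = V" using sws pW by simp
    show "\<forall>K\<in>KK'. K \<noteq> {} \<and> K \<subseteq> V" unfolding KK'_def using Ks pW by blast
    show "E = {{u, v} | u v. u \<noteq> v \<and> (\<exists>K\<in>KK'. u \<in> K \<and> v \<in> K)}"
    proof
      show "E \<subseteq> {{u, v} | u v. u \<noteq> v \<and> (\<exists>K\<in>KK'. u \<in> K \<and> v \<in> K)}"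
      proof
        fix e assume e: "e \<in> E"
        obtain u v where uv: "e = {u, v}" "u \<noteq> v" "u \<in> V" "v \<in> V" using sg_edge[OF sgV e] by blast
        have "{u, v} \<in> E \<longleftrightarrow> {\<phi> u, \<phi> v} \<in> F" using adj uv(3,4) by blast
        then have "{\<phi> u, \<phi> v} \<in> F" using uv(1) e by simp
        then have "\<exists>a b. {\<phi> u, \<phi> v} = {a, b} \<and> a \<noteq> b \<and> (\<exists>K\<in>KK. a \<in> K \<and> b \<in> K)"
          unfolding Feq mem_Collect_eq .
        then obtain a b K where ab: "{\<phi> u, \<phi> v} = {a, b}" "a \<noteq> b" "K \<in> KK" "a \<in> K" "b \<in> K"
          by (elim exE conjE bexE)
        have "\<phi> u \<in> K" "\<phi> v \<in> K" using ab by (auto simp: doubleton_eq_iff)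
        then have m: "u \<in> \<psi> ` K" "v \<in> \<psi> ` K" using psiphi uv by (metis image_eqI)+
        have KK: "\<psi> ` K \<in> KK'" unfolding KK'_def using ab by blast
        show "e \<in> {{u, v} | u v. u \<noteq> v \<and> (\<exists>K\<in>KK'. u \<in> K \<and> v \<in> K)}"
          unfolding uv(1) by (rule in_pairs[OF uv(2) KK m])
      qed
      show "{{u, v} | u v. u \<noteq> v \<and> (\<exists>K\<in>KK'. u \<in> K \<and> v \<in> K)} \<subseteq> E"
      proof
        fix e assume "e \<in> {{u, v} | u v. u \<noteq> v \<and> (\<exists>K\<in>KK'. u \<in> K \<and> v \<in> K)}"
        then have "\<exists>u v. e = {u, v} \<and> u \<noteq> v \<and> (\<exists>K\<in>KK'. u \<in> K \<and> v \<in> K)" unfolding mem_Collect_eq .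
        then obtain u v K' where uv: "e = {u, v}" "u \<noteq> v" "K' \<in> KK'" "u \<in> K'" "v \<in> K'"
          by (elim exE conjE bexE)
        then obtain K where K: "K \<in> KK" "K' = \<psi> ` K" unfolding KK'_def by blast
        obtain a where a: "a \<in> K" "u = \<psi> a" using uv K by blast
        obtain b where b: "b \<in> K" "v = \<psi> b" using uv K by blast
        have aW: "a \<in> W" "b \<in> W" using a b K Ks by blast+
        have "a \<noteq> b" using a b uv by blast
        then have "{a, b} \<in> F" unfolding Feq by (rule in_pairs[OF _ K(1) a(1) b(1)])
        moreover have "\<phi> u = a" "\<phi> v = b" using a b aW phipsi by simp_all
        moreover have "u \<in> V" "v \<in> V" using a b aW pW by blast+
        moreover have "{u, v} \<in> E \<longleftrightarrow> {\<phi> u, \<phi> v} \<in> F" using adj calculation(4,5) by blast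
        ultimately have "{u, v} \<in> E" by simp
        then show "e \<in> E" using uv by simp
      qed
    qed
    show "cnd (map \<psi> ws) KK' k"
      unfolding cnd_def
    proof
      fix n
      have sub: "{K'\<in>KK'. K' \<inter> set (drop n (map \<psi> ws)) \<noteq> {}} \<subseteq> (\<lambda>K. \<psi> ` K) ` {K\<in>KK. K \<inter> set (drop n ws) \<noteq> {}}"
      proof
        fix K' assume "K' \<in> {K'\<in>KK'. K' \<inter> set (drop n (map \<psi> ws)) \<noteq> {}}"
        then have K'm: "K' \<in> KK'" "K' \<inter> \<psi> ` set (drop n ws) \<noteq> {}" by (simp_all add: drop_map)
        then obtain K where K0: "K \<in> KK" "K' = \<psi> ` K" unfolding KK'_def by blast
        from K'm(2) obtain z where z: "z \<in> K'" "z \<in> \<psi> ` set (drop n ws)" by blast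
        have "z \<in> \<psi> ` K" using z(1) K0(2) by simp
        then obtain x where x: "z = \<psi> x" "x \<in> K" by (rule imageE)
        obtain y where y: "z = \<psi> y" "y \<in> set (drop n ws)" using z(2) by (rule imageE)
        have K: "K \<in> KK" "K' = \<psi> ` K" "x \<in> K" "y \<in> set (drop n ws)" "\<psi> x = \<psi> y"
          using K0 x y by simp_all
        have xW: "x \<in> W" using K(1,3) Ks by blast
        have "set (drop n ws) \<subseteq> set ws" by (rule set_drop_subset)
        then have yW: "y \<in> W" using K(4) sws by blast
        have "x = y" using inj_onD[OF injp K(5) xW yW] .
        then have "K \<inter> set (drop n ws) \<noteq> {}" using K(3,4) by blast
        then have "K \<in> {K\<in>KK. K \<inter> set (drop n ws) \<noteq> {}}" using K(1) by simp
        then show "K' \<in> (\<lambda>K. \<psi> ` K) ` {K\<in>KK. K \<inter> set (drop n ws) \<noteq> {}}" unfolding K(2) by (rule imageI)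
      qed
      have "card {K'\<in>KK'. K' \<inter> set (drop n (map \<psi> ws)) \<noteq> {}} \<le> card ((\<lambda>K. \<psi> ` K) ` {K\<in>KK. K \<inter> set (drop n ws) \<noteq> {}})"
        by (rule card_mono[OF _ sub]) (use finKK in simp)
      also have "\<dots> \<le> card {K\<in>KK. K \<inter> set (drop n ws) \<noteq> {}}" by (rule card_image_le) (use finKK in simp)
      finally show "card {K'\<in>KK'. K' \<inter> set (drop n (map \<psi> ws)) \<noteq> {}} + 1 \<le> length (map \<psi> ws) - n + k"
        using cn unfolding cnd_def by (metis (no_types, lifting) add_le_mono1 le_trans length_map)
    qed
  qed
qed

theorem theorem1p2:
  fixes HV :: "'b set" and HE :: "'b set set" and f :: "'b \<Rightarrow> nat"
    and V :: "'a set" and E :: "'a set set"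
  assumes "simple_graph HV HE"
    and "simple_graph V E"
    and "graph_iso V E (glg_verts HV HE f) (glg_edges HV HE f)"
  shows "competition_number V E \<le> 2"
proof -
  obtain ws where "\<exists>KK. distinct ws \<and> set ws = glg_verts HV HE f \<and> (\<forall>K\<in>KK. K \<noteq> {} \<and> K \<subseteq> glg_verts HV HE f)
    \<and> glg_edges HV HE f = {{u, w} | u w. u \<noteq> w \<and> (\<exists>K\<in>KK. u \<in> K \<and> w \<in> K)} \<and> cnd ws KK 2"
    using glg_data[OF assms(1), of f] ..
  then obtain KK where d0: "distinct ws \<and> set ws = glg_verts HV HE f \<and> (\<forall>K\<in>KK. K \<noteq> {} \<and> K \<subseteq> glg_verts HV HE f)
    \<and> glg_edges HV HE f = {{u, w} | u w. u \<noteq> w \<and> (\<exists>K\<in>KK. u \<in> K \<and> w \<in> K)} \<and> cnd ws KK 2" ..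
  have "comp_with_isolated V E 2"
    by (rule transfer[OF assms(3) assms(2) conjunct1[OF d0] conjunct1[OF conjunct2[OF d0]]
        conjunct1[OF conjunct2[OF conjunct2[OF d0]]] conjunct1[OF conjunct2[OF conjunct2[OF conjunct2[OF d0]]]]
        conjunct2[OF conjunct2[OF conjunct2[OF conjunct2[OF d0]]]]])
  then show ?thesis unfolding competition_number_def by (rule Least_le)
qed

end
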